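(* Let $n\ge1$ and let $A_1,\dots,A_n\subset\omega$ be co-infinite. Consider the equivalence relation on $\mathrm{Inj}(n\times\omega,\omega)$ generated by $\phi\sim\phi\circ(f_1\amalg\dots\amalg f_n)$ for all $\phi\in\mathrm{Inj}(n\times\omega,\omega)$ and $f_i\in\mathcal M_{A_i}$ ($i=1,\dots,n$). Then two elements of $\mathrm{Inj}(n\times\omega,\omega)$ are equivalent if and only if they agree on $\{i\}\times A_i\subset n\times\omega$ for all $i=1,\dots,n$.
   Context: $\omega=\{1,2,\dots\}$, $n=\{1,\dots,n\}$, $\mathcal M$ the monoid of injections $\omega\to\omega$, $\mathcal M_A$ the submonoid of injections fixing $A$ elementwise. $\mathrm{Inj}(n\times\omega,\omega)$ is the set of injections $n\times\omega\to\omega$, and $f_1\amalg\dots\amalg f_n$ is the self-map of $n\times\omega$ sending $(i,t)$ to $(i,f_i(t))$. A subset of $\omega$ is co-infinite if its complement is infinite. *)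

theory Defs
  imports Main
begin

text \<open>omega is modelled by nat (a relabelling of {1,2,...}); the index set n = {1..n}
  is modelled by a finite type 'n (so n = CARD('n) \<ge> 1).\<close>

definition Inj_prod :: "('n \<times> nat \<Rightarrow> nat) set" where
  "Inj_prod = {\<phi>. inj \<phi>}"

definition M_fix :: "nat set \<Rightarrow> (nat \<Rightarrow> nat) set" where
  "M_fix A = {f. inj f \<and> (\<forall>a\<in>A. f a = a)}"

definition coprod :: "('n \<Rightarrow> nat \<Rightarrow> nat) \<Rightarrow> ('n \<times> nat \<Rightarrow> 'n \<times> nat)" where
  "coprod f = (\<lambda>(i, t). (i, f i t))"

definition gen_rel :: "('n \<Rightarrow> nat set) \<Rightarrow> (('n \<times> nat \<Rightarrow> nat) \<times> ('n \<times> nat \<Rightarrow> nat)) set" where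
  "gen_rel A = {(\<phi>, \<phi> \<circ> coprod f) | \<phi> f. \<phi> \<in> Inj_prod \<and> (\<forall>i. f i \<in> M_fix (A i))}"

definition gen_equiv :: "('n \<Rightarrow> nat set) \<Rightarrow> (('n \<times> nat \<Rightarrow> nat) \<times> ('n \<times> nat \<Rightarrow> nat)) set" where
  "gen_equiv A = (gen_rel A \<union> (gen_rel A)\<inverse>)\<^sup>*"

end

theory Submission imports Defs "HOL-Library.Infinite_Set" begin

fun pick :: "(nat \<Rightarrow> nat set) \<Rightarrow> nat \<Rightarrow> nat" where
  "pick F 0 = (LEAST x. x \<in> F 0)"
| "pick F (Suc t) = (LEAST x. x \<in> F (Suc t) \<and> pick F t < x)"

lemma pick_props:
  fixes F t
  assumes "\<And>s. infinite (F s)"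
  shows "pick F t \<in> F t \<and> (t > 0 \<longrightarrow> pick F (t - 1) < pick F t)"
proof (cases t)
  case 0
  have "\<exists>x. x \<in> F 0" using assms[of 0] by (metis finite.emptyI ex_in_conv)
  then show ?thesis using 0 by (auto intro: LeastI_ex)
next
  case (Suc s)
  have "\<exists>x. x \<in> F (Suc s) \<and> pick F s < x"
    using assms[of "Suc s"] by (meson infinite_nat_iff_unbounded)
  then show ?thesis using Suc by (auto intro: LeastI2_ex)
qed

lemma pick_mono:
  assumes "\<And>t. infinite (F t)"
  shows "strict_mono (pick F)"
  unfolding strict_mono_Suc_iff
proof
  fix n show "pick F n < pick F (Suc n)" using pick_props[of F "Suc n", OF assms] by simp
qed

lemma disjointify:
  fixes S :: "'k::finite \<Rightarrow> nat set"
  assumes inf: "\<And>k. infinite (S k)"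
  shows "\<exists>T. \<forall>k. T k \<subseteq> S k \<and> infinite (T k) \<and> (\<forall>k'. k \<noteq> k' \<longrightarrow> T k \<inter> T k' = {})"
proof -
  obtain g :: "nat \<Rightarrow> 'k" where g: "bij_betw g {0..<card (UNIV::'k set)} UNIV"
    using ex_bij_betw_nat_finite[of "UNIV::'k set"] by auto
  define L where "L = card (UNIV::'k set)"
  have L0: "L > 0" unfolding L_def by (simp add: card_gt_0_iff)
  define h where "h t = g (t mod L)" for t
  define F where "F t = S (h t)" for t
  have Finf: "\<And>t. infinite (F t)" using inf by (simp add: F_def)
  define T where "T k = pick F ` {t. h t = k}" for k
  have hinf: "infinite {t. h t = k}" for k
  proof -
    have "k \<in> g ` {0..<L}" using g unfolding bij_betw_def L_def by simp
    then obtain p where p: "p < L" "g p = k" by auto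
    have sub: "range (\<lambda>m. p + L * m) \<subseteq> {t. h t = k}" using p by (auto simp: h_def)
    have inj: "inj (\<lambda>m. p + L * m)" using L0 by (auto simp: inj_on_def)
    show ?thesis
    proof
      assume "finite {t. h t = k}"
      then have "finite (range (\<lambda>m. p + L * m))" using sub by (rule finite_subset[rotated])
      then have "finite (UNIV :: nat set)" using inj by (rule finite_imageD)
      then show False by simp
    qed
  qed
  have injp: "inj (pick F)" by (rule strict_mono_imp_inj_on[OF pick_mono[of F, OF Finf]])
  have "\<forall>k. T k \<subseteq> S k \<and> infinite (T k) \<and> (\<forall>k'. k \<noteq> k' \<longrightarrow> T k \<inter> T k' = {})"
  proof (intro allI conjI impI)
    fix k
    show "T k \<subseteq> S k" using pick_props[of F, OF Finf] by (auto simp: T_def F_def)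
    have "inj_on (pick F) {t. h t = k}" using injp by (rule inj_on_subset) simp
    then show "infinite (T k)" unfolding T_def using hinf[of k] by (simp add: finite_image_iff)
    fix k' assume kk: "k \<noteq> k'"
    show "T k \<inter> T k' = {}"
    proof (rule equals0I)
      fix x assume "x \<in> T k \<inter> T k'"
      then obtain a b where ab: "h a = k" "h b = k'" "x = pick F a" "x = pick F b" unfolding T_def by blast
      then have "pick F a = pick F b" by simp
      then have "a = b" using injp by (rule injD[rotated])
      then show False using ab kk by simp
    qed
  qed
  then show ?thesis by blast
qed

lemma fwd:
  assumes "(\<phi>, \<psi>) \<in> gen_equiv A"
  shows "\<forall>i. \<forall>a\<in>A i. \<phi> (i, a) = \<psi> (i, a)"
  using assms unfolding gen_equiv_def
proof (induction rule: rtrancl_induct)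
  case base then show ?case by simp
next
  case (step y z)
  then show ?case by (auto simp: gen_rel_def M_fix_def coprod_def)
qed

lemma step_equiv:
  assumes "\<phi> \<in> Inj_prod" "\<forall>i. f i \<in> M_fix (A i)"
  shows "(\<phi>, \<phi> \<circ> coprod f) \<in> gen_equiv A"
proof -
  have "(\<phi>, \<phi> \<circ> coprod f) \<in> gen_rel A" using assms unfolding gen_rel_def by blast
  then show ?thesis unfolding gen_equiv_def by blast
qed

lemma sym_equiv:
  assumes "(x, y) \<in> gen_equiv A"
  shows "(y, x) \<in> gen_equiv A"
proof -
  have "(y, x) \<in> ((gen_rel A \<union> (gen_rel A)\<inverse>)\<inverse>)\<^sup>*"
    using assms unfolding gen_equiv_def by (rule rtrancl_converseI)
  then show ?thesis unfolding gen_equiv_def by (simp add: converse_Un sup_commute)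
qed

lemma trans_equiv:
  assumes "(x, y) \<in> gen_equiv A" "(y, z) \<in> gen_equiv A"
  shows "(x, z) \<in> gen_equiv A"
  using assms unfolding gen_equiv_def by (rule rtrancl_trans)

lemma meet:
  assumes phi: "\<phi> \<in> Inj_prod" and psi: "\<psi> \<in> Inj_prod"
    and agree: "\<forall>i. \<forall>a\<in>A i. \<phi> (i, a) = \<psi> (i, a)"
    and inf: "\<forall>i. infinite ((\<lambda>b. \<phi> (i, b)) ` (- A i) \<inter> (\<lambda>b. \<psi> (i, b)) ` (- A i))"
  shows "(\<phi>, \<psi>) \<in> gen_equiv A"
proof -
  have injphi: "inj \<phi>" and injpsi: "inj \<psi>" using phi psi by (auto simp: Inj_prod_def)
  define D where "D i = {b \<in> - A i. \<phi> (i, b) \<in> (\<lambda>b. \<psi> (i, b)) ` (- A i)}" for i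
  have Dinf: "infinite (D i)" for i
  proof -
    have "(\<lambda>b. \<phi> (i, b)) ` D i = (\<lambda>b. \<phi> (i, b)) ` (- A i) \<inter> (\<lambda>b. \<psi> (i, b)) ` (- A i)"
      by (auto simp: D_def)
    then show ?thesis using inf by (metis finite_imageI)
  qed
  have enD: "enumerate (D i) t \<in> D i" for i t using enumerate_in_set[OF Dinf] .
  have injenum: "inj (enumerate (D i))" for i using inj_enumerate[OF Dinf] .
  have injpsii: "inj (\<lambda>b. \<psi> (i, b))" for i using injpsi by (auto simp: inj_on_def)
  define f where "f i t = (if t \<in> A i then t else enumerate (D i) t)" for i t
  define g where "g i t = (if t \<in> A i then t else
      inv_into (- A i) (\<lambda>b. \<psi> (i, b)) (\<phi> (i, enumerate (D i) t)))" for i t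
  have gval: "g i t \<in> - A i \<and> \<psi> (i, g i t) = \<phi> (i, enumerate (D i) t)" if "t \<notin> A i" for i t
  proof -
    have "\<phi> (i, enumerate (D i) t) \<in> (\<lambda>b. \<psi> (i, b)) ` (- A i)" using enD[of i t] by (simp add: D_def)
    then have "inv_into (- A i) (\<lambda>b. \<psi> (i, b)) (\<phi> (i, enumerate (D i) t)) \<in> - A i"
      by (rule inv_into_into)
    with \<open>\<phi> (i, enumerate (D i) t) \<in> _\<close> show ?thesis using that unfolding g_def
      by (simp add: f_inv_into_f[where f="\<lambda>b. \<psi> (i, b)"])
  qed
  have fM: "\<forall>i. f i \<in> M_fix (A i)"
  proof
    fix i
    have "inj (f i)" unfolding inj_on_def
    proof (intro ballI impI)
      fix x y assume "f i x = f i y"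
      then show "x = y" using enD[of i x] enD[of i y] injenum[of i]
        by (auto simp: f_def D_def split: if_splits dest: injD)
    qed
    then show "f i \<in> M_fix (A i)" by (simp add: M_fix_def f_def)
  qed
  have gM: "\<forall>i. g i \<in> M_fix (A i)"
  proof
    fix i
    have "inj (g i)" unfolding inj_on_def
    proof (intro ballI impI)
      fix x y assume xy: "g i x = g i y"
      show "x = y"
      proof (cases "x \<in> A i"; cases "y \<in> A i")
        assume "x \<notin> A i" "y \<notin> A i"
        then have "\<phi> (i, enumerate (D i) x) = \<phi> (i, enumerate (D i) y)" using gval xy by metis
        then have "enumerate (D i) x = enumerate (D i) y" using injphi by (auto dest: injD)
        then show ?thesis using injenum by (auto dest: injD)
      qed (use xy gval in \<open>auto simp: g_def\<close>)
    qed
    then show "g i \<in> M_fix (A i)" by (simp add: M_fix_def g_def)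
  qed
  have eq: "\<phi> \<circ> coprod f = \<psi> \<circ> coprod g"
  proof
    fix p show "(\<phi> \<circ> coprod f) p = (\<psi> \<circ> coprod g) p"
    proof (cases p)
      case (Pair i t)
      then show ?thesis using agree gval[of t i] by (auto simp: coprod_def f_def g_def)
    qed
  qed
  have "(\<phi>, \<phi> \<circ> coprod f) \<in> gen_equiv A" using step_equiv[OF phi fM] .
  moreover have "(\<psi> \<circ> coprod g, \<psi>) \<in> gen_equiv A" using sym_equiv[OF step_equiv[OF psi gM]] .
  ultimately show ?thesis using eq trans_equiv by metis
qed

theorem lemma2p27:
  fixes A :: "'n::finite \<Rightarrow> nat set"
  assumes coinf: "\<And>i. infinite (- A i)"
    and phi: "\<phi> \<in> Inj_prod" and psi: "\<psi> \<in> Inj_prod"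
  shows "(\<phi>, \<psi>) \<in> gen_equiv A \<longleftrightarrow> (\<forall>i. \<forall>a\<in>A i. \<phi> (i, a) = \<psi> (i, a))"
proof
  assume "(\<phi>, \<psi>) \<in> gen_equiv A" then show "\<forall>i. \<forall>a\<in>A i. \<phi> (i, a) = \<psi> (i, a)" by (rule fwd)
next
  assume agree: "\<forall>i. \<forall>a\<in>A i. \<phi> (i, a) = \<psi> (i, a)"
  have injphi: "inj \<phi>" and injpsi: "inj \<psi>" using phi psi by (auto simp: Inj_prod_def)
  define S :: "'n \<times> bool \<Rightarrow> nat set" where
    "S = (\<lambda>(i, c). if c then (\<lambda>b. \<phi> (i, b)) ` (- A i) else (\<lambda>b. \<psi> (i, b)) ` (- A i))"
  have Sinf: "infinite (S k)" for k
  proof (cases k)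
    case (Pair i c)
    have "inj_on (\<lambda>b. \<phi> (i, b)) (- A i)" "inj_on (\<lambda>b. \<psi> (i, b)) (- A i)"
      unfolding inj_on_def using injD[OF injphi] injD[OF injpsi] by blast+
    then have "infinite ((\<lambda>b. \<phi> (i, b)) ` (- A i))" "infinite ((\<lambda>b. \<psi> (i, b)) ` (- A i))"
      using coinf[of i] by (simp_all add: finite_image_iff)
    then show ?thesis using Pair by (simp add: S_def)
  qed
  from disjointify[OF Sinf] obtain T where
    T0: "\<forall>k. T k \<subseteq> S k \<and> infinite (T k) \<and> (\<forall>k'. k \<noteq> k' \<longrightarrow> T k \<inter> T k' = {})" ..
  have T1: "\<And>k. T k \<subseteq> S k" using T0 by blast
  have T2: "\<And>k. infinite (T k)" using T0 by blast
  have T3: "\<And>k k'. k \<noteq> k' \<Longrightarrow> T k \<inter> T k' = {}" using T0 by blast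
  note T = T1 T2 T3
  define R where "R i = T (i, True) \<union> T (i, False)" for i
  have Rinf: "infinite (R i)" for i using T(2) by (simp add: R_def)
  have Rdisj: "i \<noteq> j \<Longrightarrow> R i \<inter> R j = {}" for i j unfolding R_def
    using T(3)[of "(i,True)" "(j,True)"] T(3)[of "(i,True)" "(j,False)"]
      T(3)[of "(i,False)" "(j,True)"] T(3)[of "(i,False)" "(j,False)"] by auto
  have RS: "R i \<subseteq> (\<lambda>b. \<phi> (i, b)) ` (- A i) \<union> (\<lambda>b. \<psi> (i, b)) ` (- A i)" for i
    using T(1)[of "(i, True)"] T(1)[of "(i, False)"] by (auto simp: R_def S_def)
  define idx where "idx i t = inv_into UNIV (enumerate (- A i)) t" for i t
  have bijA: "bij_betw (enumerate (- A i)) UNIV (- A i)" for i using bij_enumerate[OF coinf] .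
  have injA: "inj (enumerate (- A i))" for i using inj_enumerate[OF coinf] .
  have idx1: "t \<in> - A i \<Longrightarrow> enumerate (- A i) (idx i t) = t" for i t
    using bijA[of i] unfolding idx_def bij_betw_def by (simp add: f_inv_into_f)
  have idx2: "idx i (enumerate (- A i) m) = m" for i m
    using injA[of i] unfolding idx_def by simp
  define \<rho> where "\<rho> p = (case p of (i, t) \<Rightarrow> if t \<in> A i then \<phi> (i, t) else enumerate (R i) (idx i t))" for p
  have img: "R i \<subseteq> (\<lambda>b. \<rho> (i, b)) ` (- A i)" for i
  proof
    fix r assume "r \<in> R i"
    then obtain m where m: "r = enumerate (R i) m"
      using bij_enumerate[OF Rinf[of i]] unfolding bij_betw_def by auto
    have "enumerate (- A i) m \<in> - A i" using enumerate_in_set[OF coinf] .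
    moreover have "\<rho> (i, enumerate (- A i) m) = r" using calculation m by (simp add: \<rho>_def idx2)
    ultimately show "r \<in> (\<lambda>b. \<rho> (i, b)) ` (- A i)" by force
  qed
  have Rin: "enumerate (R i) m \<in> R i" for i m using enumerate_in_set[OF Rinf] .
  have injR: "inj (enumerate (R i))" for i using inj_enumerate[OF Rinf] .
  have cross: False if "t \<in> A i" "s \<notin> A j" "\<phi> (i, t) = enumerate (R j) (idx j s)" for i j t s
  proof -
    have "\<phi> (i, t) \<in> R j" using that(3) Rin by simp
    then obtain b where b: "b \<in> - A j" "\<phi> (i, t) = \<phi> (j, b) \<or> \<phi> (i, t) = \<psi> (j, b)" using RS[of j] by blast
    have "\<phi> (i, t) = \<psi> (i, t)" using agree that(1) by blast
    then have "(i, t) = (j, b)"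
    proof -
      assume e: "\<phi> (i, t) = \<psi> (i, t)"
      from b(2) show ?thesis
      proof
        assume "\<phi> (i, t) = \<phi> (j, b)" then show ?thesis using injphi by (rule injD[rotated])
      next
        assume "\<phi> (i, t) = \<psi> (j, b)" then have "\<psi> (i, t) = \<psi> (j, b)" using e by simp
        then show ?thesis using injpsi by (rule injD[rotated])
      qed
    qed
    then show False using that(1) b(1) by simp
  qed
  have injrho: "inj \<rho>" unfolding inj_on_def
  proof (intro ballI impI)
    fix p q assume pq: "\<rho> p = \<rho> q"
    obtain i t where p: "p = (i, t)" by (cases p)
    obtain j s where q: "q = (j, s)" by (cases q)
    show "p = q"
    proof (cases "t \<in> A i"; cases "s \<in> A j")
      assume ts: "t \<in> A i" "s \<in> A j"
      then have "\<phi> (i, t) = \<phi> (j, s)" using pq unfolding p q \<rho>_def by simp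
      then have "(i, t) = (j, s)" using injphi by (rule injD[rotated])
      then show ?thesis unfolding p q .
    next
      assume ts: "t \<in> A i" "s \<notin> A j"
      then have "\<phi> (i, t) = enumerate (R j) (idx j s)" using pq unfolding p q \<rho>_def by simp
      then have False by (rule cross[OF ts])
      then show ?thesis ..
    next
      assume ts: "t \<notin> A i" "s \<in> A j"
      then have "\<phi> (j, s) = enumerate (R i) (idx i t)" using pq unfolding p q \<rho>_def by simp
      then have False by (rule cross[OF ts(2) ts(1)])
      then show ?thesis ..
    next
      assume ts: "t \<notin> A i" "s \<notin> A j"
      then have e: "enumerate (R i) (idx i t) = enumerate (R j) (idx j s)" using pq unfolding p q \<rho>_def by simp
      have "i = j"
      proof (rule ccontr)
        assume "i \<noteq> j"
        then have "R i \<inter> R j = {}" by (rule Rdisj)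
        moreover have "enumerate (R i) (idx i t) \<in> R i \<inter> R j" using Rin[of i "idx i t"] Rin[of j "idx j s"] e by simp
        ultimately show False by simp
      qed
      with e have "enumerate (R i) (idx i t) = enumerate (R i) (idx i s)" by simp
      then have ii: "idx i t = idx i s" using injR[of i] by (rule injD[rotated])
      have "t = enumerate (- A i) (idx i t)" using idx1[of t i] ts by simp
      also have "\<dots> = enumerate (- A i) (idx i s)" using ii by simp
      also have "\<dots> = s" using idx1[of s i] ts \<open>i = j\<close> by simp
      finally have "t = s" .
      then show ?thesis unfolding p q using \<open>i = j\<close> by simp
    qed
  qed
  then have rho: "\<rho> \<in> Inj_prod" by (simp add: Inj_prod_def)
  have agr1: "\<forall>i. \<forall>a\<in>A i. \<phi> (i, a) = \<rho> (i, a)" by (simp add: \<rho>_def)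
  have agr2: "\<forall>i. \<forall>a\<in>A i. \<psi> (i, a) = \<rho> (i, a)" using agree by (simp add: \<rho>_def)
  have inf1: "\<forall>i. infinite ((\<lambda>b. \<phi> (i, b)) ` (- A i) \<inter> (\<lambda>b. \<rho> (i, b)) ` (- A i))"
  proof
    fix i
    have "T (i, True) \<subseteq> (\<lambda>b. \<phi> (i, b)) ` (- A i) \<inter> (\<lambda>b. \<rho> (i, b)) ` (- A i)"
      using T(1)[of "(i, True)"] img[of i] by (auto simp: S_def R_def)
    then show "infinite ((\<lambda>b. \<phi> (i, b)) ` (- A i) \<inter> (\<lambda>b. \<rho> (i, b)) ` (- A i))"
      using T(2) by (rule infinite_super)
  qed
  have inf2: "\<forall>i. infinite ((\<lambda>b. \<psi> (i, b)) ` (- A i) \<inter> (\<lambda>b. \<rho> (i, b)) ` (- A i))"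
  proof
    fix i
    have "T (i, False) \<subseteq> (\<lambda>b. \<psi> (i, b)) ` (- A i) \<inter> (\<lambda>b. \<rho> (i, b)) ` (- A i)"
      using T(1)[of "(i, False)"] img[of i] by (auto simp: S_def R_def)
    then show "infinite ((\<lambda>b. \<psi> (i, b)) ` (- A i) \<inter> (\<lambda>b. \<rho> (i, b)) ` (- A i))"
      using T(2) by (rule infinite_super)
  qed
  have "(\<phi>, \<rho>) \<in> gen_equiv A" using meet[OF phi rho agr1 inf1] .
  moreover have "(\<rho>, \<psi>) \<in> gen_equiv A" using sym_equiv[OF meet[OF psi rho agr2 inf2]] .
  ultimately show "(\<phi>, \<psi>) \<in> gen_equiv A" by (rule trans_equiv)
qed
end
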